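(* Let $n\ge2$ be even. The permutation representation of $S_n$ over $\mathbb{C}$ arising from the action of $S_n$ (by $\pi\cdot S=\pi(S)$) on the set of even-sized subsets of $\{1,\dots,n\}$ unites conjugacy classes; specifically, $\sigma=(1,2)(3,4)\cdots(n-1,n)$ and $\tau=(1)(2)(3,4)\cdots(n-1,n)$ are not conjugate in $S_n$ but have similar images.
   Context: A representation $T$ of $G$ unites conjugacy classes if there are non-conjugate $\sigma,\tau\in G$ with $T(\sigma),T(\tau)$ similar matrices. *)

theory Defs
  imports Complex_Main "HOL-Combinatorics.Permutations"
begin

text \<open>Square matrices over the complex numbers indexed by a finite set I,
  represented as functions I => I => complex (only values on I matter).\<close>

definition mat_mult :: "'i set \<Rightarrow> ('i \<Rightarrow> 'i \<Rightarrow> complex) \<Rightarrow> ('i \<Rightarrow> 'i \<Rightarrow> complex) \<Rightarrow> ('i \<Rightarrow> 'i \<Rightarrow> complex)" where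
  "mat_mult I A B = (\<lambda>i k. \<Sum>j\<in>I. A i j * B j k)"

definition mat_id :: "'i \<Rightarrow> 'i \<Rightarrow> complex" where
  "mat_id = (\<lambda>i j. if i = j then 1 else 0)"

definition mat_eq_on :: "'i set \<Rightarrow> ('i \<Rightarrow> 'i \<Rightarrow> complex) \<Rightarrow> ('i \<Rightarrow> 'i \<Rightarrow> complex) \<Rightarrow> bool" where
  "mat_eq_on I A B \<longleftrightarrow> (\<forall>i\<in>I. \<forall>j\<in>I. A i j = B i j)"

definition similar_on :: "'i set \<Rightarrow> ('i \<Rightarrow> 'i \<Rightarrow> complex) \<Rightarrow> ('i \<Rightarrow> 'i \<Rightarrow> complex) \<Rightarrow> bool" where
  "similar_on I A B \<longleftrightarrow> (\<exists>P Q. mat_eq_on I (mat_mult I P Q) mat_id \<and> mat_eq_on I (mat_mult I Q P) mat_id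
      \<and> mat_eq_on I (mat_mult I (mat_mult I P A) Q) B)"

definition conj_Sn :: "nat \<Rightarrow> (nat \<Rightarrow> nat) \<Rightarrow> (nat \<Rightarrow> nat) \<Rightarrow> bool" where
  "conj_Sn n \<sigma> \<tau> \<longleftrightarrow> (\<exists>g. g permutes {1..n} \<and> \<tau> = g \<circ> \<sigma> \<circ> inv g)"

definition even_subsets :: "nat \<Rightarrow> nat set set" where
  "even_subsets n = {S. S \<subseteq> {1..n} \<and> even (card S)}"

definition even_subset_rep :: "(nat \<Rightarrow> nat) \<Rightarrow> nat set \<Rightarrow> nat set \<Rightarrow> complex" where
  "even_subset_rep \<pi> = (\<lambda>S T. if \<pi> ` T = S then 1 else 0)"

definition unites_conjugacy_classes_even_subsets :: "nat \<Rightarrow> bool" where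
  "unites_conjugacy_classes_even_subsets n \<longleftrightarrow>
     (\<exists>\<sigma> \<tau>. \<sigma> permutes {1..n} \<and> \<tau> permutes {1..n} \<and> \<not> conj_Sn n \<sigma> \<tau> \<and>
        similar_on (even_subsets n) (even_subset_rep \<sigma>) (even_subset_rep \<tau>))"

text \<open>\<sigma> = (1,2)(3,4)...(n-1,n) and \<tau> = (1)(2)(3,4)...(n-1,n).\<close>
definition sigma_pairs :: "nat \<Rightarrow> nat \<Rightarrow> nat" where
  "sigma_pairs n i = (if 1 \<le> i \<and> i \<le> n then (if odd i then i + 1 else i - 1) else i)"

definition tau_pairs :: "nat \<Rightarrow> nat \<Rightarrow> nat" where
  "tau_pairs n i = (if 3 \<le> i \<and> i \<le> n then (if odd i then i + 1 else i - 1) else i)"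

end

theory Submission
  imports Defs
begin

definition Mh :: "(nat set \<Rightarrow> nat set) \<Rightarrow> nat set \<Rightarrow> nat set \<Rightarrow> complex" where
  "Mh h = (\<lambda>S T. if h T = S then 1 else 0)"

lemma mult_Mh:
  assumes "h2 k \<in> X" "finite X"
  shows "mat_mult X (Mh h1) (Mh h2) i k = Mh (h1 \<circ> h2) i k"
proof -
  have "mat_mult X (Mh h1) (Mh h2) i k
        = (\<Sum>j\<in>X. if j = h2 k then (if h1 j = i then 1 else 0) else 0)"
    unfolding mat_mult_def Mh_def by (rule sum.cong) auto
  also have "\<dots> = Mh (h1 \<circ> h2) i k"
    using assms by (simp add: Mh_def sum.delta')
  finally show ?thesis .
qed

lemma sim_general:
  assumes fin: "finite X" and X: "\<And>x. x \<in> X \<Longrightarrow> \<phi> x \<in> X \<and> \<phi> (\<phi> x) = x \<and> f x \<in> X \<and> \<phi> (f x) = g (\<phi> x)"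
  shows "similar_on X (Mh f) (Mh g)"
  unfolding similar_on_def
proof (intro exI conjI)
  show "mat_eq_on X (mat_mult X (Mh \<phi>) (Mh \<phi>)) mat_id"
    unfolding mat_eq_on_def
  proof (intro ballI)
    fix i j assume "i \<in> X" "j \<in> X"
    then show "mat_mult X (Mh \<phi>) (Mh \<phi>) i j = mat_id i j"
      using X fin by (subst mult_Mh) (auto simp: Mh_def mat_id_def)
  qed
  then show "mat_eq_on X (mat_mult X (Mh \<phi>) (Mh \<phi>)) mat_id" .
  show "mat_eq_on X (mat_mult X (mat_mult X (Mh \<phi>) (Mh f)) (Mh \<phi>)) (Mh g)"
    unfolding mat_eq_on_def
  proof (intro ballI)
    fix i k assume "i \<in> X" "k \<in> X"
    have "mat_mult X (mat_mult X (Mh \<phi>) (Mh f)) (Mh \<phi>) i k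
        = mat_mult X (Mh (\<phi> \<circ> f)) (Mh \<phi>) i k"
      unfolding mat_mult_def[of X "mat_mult X (Mh \<phi>) (Mh f)"]
        mat_mult_def[of X "Mh (\<phi> \<circ> f)"]
      by (rule sum.cong) (auto simp: X mult_Mh fin)
    also have "\<dots> = Mh (\<phi> \<circ> f \<circ> \<phi>) i k"
      using X fin \<open>k \<in> X\<close> by (simp add: mult_Mh)
    also have "\<dots> = Mh g i k"
      using X[of k] X[of "\<phi> k"] \<open>k \<in> X\<close> by (simp add: Mh_def)
    finally show "mat_mult X (mat_mult X (Mh \<phi>) (Mh f)) (Mh \<phi>) i k = Mh g i k" .
  qed
qed

definition s12 :: "nat \<Rightarrow> nat" where
  "s12 i = (if i = 1 then 2 else if i = 2 then 1 else i)"

definition Od :: "nat set" where "Od = {i. odd i \<and> 3 \<le> i}"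
definition Ev :: "nat set" where "Ev = {i. even i \<and> 3 \<le> i}"

definition phi :: "nat set \<Rightarrow> nat set" where
  "phi S = (if odd (card (S \<inter> Od)) then s12 ` S else S)"

lemma sigma_eq: "2 \<le> n \<Longrightarrow> sigma_pairs n i = s12 (tau_pairs n i)"
  unfolding sigma_pairs_def tau_pairs_def s12_def by (auto; presburger)

lemma s12_tau: "s12 (tau_pairs n i) = tau_pairs n (s12 i)"
  unfolding tau_pairs_def s12_def by (auto; presburger)

lemma s12_s12[simp]: "s12 (s12 i) = i"
  unfolding s12_def by auto

lemma inj_s12: "inj s12"
  by (metis injI s12_s12)

lemma tau_tau: "even n \<Longrightarrow> tau_pairs n (tau_pairs n i) = i"
  unfolding tau_pairs_def by (auto; presburger)

lemma sigma_sigma: "even n \<Longrightarrow> sigma_pairs n (sigma_pairs n i) = i"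
  unfolding sigma_pairs_def by (auto; presburger)

lemma tau_range: "even n \<Longrightarrow> i \<in> {1..n} \<Longrightarrow> tau_pairs n i \<in> {1..n}"
  unfolding tau_pairs_def by (auto; presburger)

lemma sigma_range: "even n \<Longrightarrow> i \<in> {1..n} \<Longrightarrow> sigma_pairs n i \<in> {1..n}"
  unfolding sigma_pairs_def by (auto; presburger)

lemma inj_tau: "even n \<Longrightarrow> inj (tau_pairs n)"
  by (metis injI tau_tau)

lemma inj_sigma: "even n \<Longrightarrow> inj (sigma_pairs n)"
  by (metis injI sigma_sigma)

lemma tau_Od: "even n \<Longrightarrow> i \<in> {1..n} \<Longrightarrow> tau_pairs n i \<in> Od \<longleftrightarrow> i \<in> Ev"
  unfolding tau_pairs_def Od_def Ev_def by (auto; presburger)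

lemma s12_Od: "s12 i \<in> Od \<longleftrightarrow> i \<in> Od"
  unfolding s12_def Od_def by auto

lemma card_tau_Od:
  assumes "even n" "S \<subseteq> {1..n}"
  shows "card (tau_pairs n ` S \<inter> Od) = card (S \<inter> Ev)"
proof -
  have "tau_pairs n ` S \<inter> Od = tau_pairs n ` (S \<inter> Ev)"
    using tau_Od[OF assms(1)] assms(2) by blast
  then show ?thesis
    using inj_tau[OF assms(1)] by (simp add: card_image inj_on_subset)
qed

lemma s12_Od_fix: "x \<in> Od \<Longrightarrow> s12 x = x"
  unfolding s12_def Od_def by auto

lemma s12_img_Od: "s12 ` T \<inter> Od = T \<inter> Od"
proof
  show "s12 ` T \<inter> Od \<subseteq> T \<inter> Od" using s12_Od s12_Od_fix by fastforce
  show "T \<inter> Od \<subseteq> s12 ` T \<inter> Od"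
  proof
    fix x assume x: "x \<in> T \<inter> Od"
    then have "s12 x = x" unfolding Od_def s12_def by auto
    then show "x \<in> s12 ` T \<inter> Od" using x by (metis IntE IntI image_eqI)
  qed
qed

lemma card_split:
  assumes "S \<subseteq> {1..n}"
  shows "card S = card (S \<inter> {1,2}) + card (S \<inter> Od) + card (S \<inter> Ev)"
proof -
  have fin: "finite S" using assms finite_subset by blast
  have "S = (S \<inter> {1,2}) \<union> (S \<inter> Od) \<union> (S \<inter> Ev)"
    using assms unfolding Od_def Ev_def by auto
  then have "card S = card ((S \<inter> {1,2}) \<union> (S \<inter> Od) \<union> (S \<inter> Ev))" by simp
  also have "\<dots> = card ((S \<inter> {1,2}) \<union> (S \<inter> Od)) + card (S \<inter> Ev)"
    by (rule card_Un_disjoint) (use fin in \<open>auto simp: Od_def Ev_def\<close>)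
  also have "card ((S \<inter> {1,2}) \<union> (S \<inter> Od)) = card (S \<inter> {1,2}) + card (S \<inter> Od)"
    by (rule card_Un_disjoint) (use fin in \<open>auto simp: Od_def\<close>)
  finally show ?thesis .
qed

lemma s12_fix:
  assumes "even (card (S \<inter> {1,2::nat}))"
  shows "s12 ` S = S"
proof -
  have "1 \<in> S \<longleftrightarrow> 2 \<in> S"
  proof (rule ccontr)
    assume "\<not> (1 \<in> S \<longleftrightarrow> 2 \<in> S)"
    then have "card (S \<inter> {1,2}) = 1"
    proof (cases "1 \<in> S")
      case True
      with \<open>\<not> (1 \<in> S \<longleftrightarrow> 2 \<in> S)\<close> have "S \<inter> {1,2} = {1}" by auto
      then show ?thesis by simp
    next
      case False
      with \<open>\<not> (1 \<in> S \<longleftrightarrow> 2 \<in> S)\<close> have "S \<inter> {1,2} = {2}" by auto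
      then show ?thesis by simp
    qed
    then show False using assms by simp
  qed
  have "s12 x \<in> S" if "x \<in> S" for x
    using that \<open>1 \<in> S \<longleftrightarrow> 2 \<in> S\<close> unfolding s12_def by (cases "x = 1") auto
  then have "s12 ` S \<subseteq> S" by blast
  moreover have "S \<subseteq> s12 ` S"
  proof
    fix x assume "x \<in> S"
    then have "s12 (s12 x) \<in> s12 ` S" using \<open>\<And>x. x \<in> S \<Longrightarrow> s12 x \<in> S\<close> by blast
    then show "x \<in> s12 ` S" by simp
  qed
  ultimately show ?thesis by blast
qed


lemma s12_s12_img[simp]: "s12 ` (s12 ` S) = S"
  by (simp add: image_comp o_def)

lemma phi_phi: "phi (phi S) = S"
  unfolding phi_def by (simp add: s12_img_Od)

lemma s12_range: "2 \<le> n \<Longrightarrow> i \<in> {1..n} \<Longrightarrow> s12 i \<in> {1..n}"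
  unfolding s12_def by auto

lemma img_in_X:
  assumes "S \<in> even_subsets n" "inj f" "\<And>i. i \<in> {1..n} \<Longrightarrow> f i \<in> {1..n}"
  shows "f ` S \<in> even_subsets n"
  using assms unfolding even_subsets_def
  by (auto simp: card_image inj_on_subset)

lemma phi_comm:
  assumes n2: "2 \<le> n" and en: "even n" and SX: "S \<in> even_subsets n"
  shows "phi (sigma_pairs n ` S) = tau_pairs n ` phi S"
proof -
  have Ssub: "S \<subseteq> {1..n}" and eS: "even (card S)" using SX unfolding even_subsets_def by auto
  define T where "T = tau_pairs n ` S"
  have sT: "sigma_pairs n ` S = s12 ` T"
    unfolding T_def image_comp o_def using sigma_eq[OF n2] by simp
  have tS: "tau_pairs n ` (s12 ` S) = s12 ` T"
    unfolding T_def image_comp o_def using s12_tau by simp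
  have cT: "card (s12 ` T \<inter> Od) = card (S \<inter> Ev)"
    unfolding s12_img_Od T_def using card_tau_Od[OF en Ssub] .
  have cs: "card S = card (S \<inter> {1,2}) + card (S \<inter> Od) + card (S \<inter> Ev)"
    using card_split[OF Ssub] .
  show ?thesis
  proof (cases "even (card (S \<inter> Od) + card (S \<inter> Ev))")
    case True
    then have "even (card (S \<inter> {1,2}))" using eS cs by presburger
    then have f: "s12 ` S = S" by (rule s12_fix)
    then have fT: "s12 ` T = T" using tS T_def by simp
    have "phi (sigma_pairs n ` S) = T"
      unfolding sT fT phi_def by (simp add: fT)
    moreover have "tau_pairs n ` phi S = T"
      unfolding phi_def by (simp add: f T_def)
    ultimately show ?thesis by simp
  next
    case False
    show ?thesis
    proof (cases "odd (card (S \<inter> Ev))")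
      case True
      then have "even (card (S \<inter> Od))" using False by presburger
      then show ?thesis unfolding sT phi_def using cT True by (simp add: T_def)
    next
      case F2: False
      then have "odd (card (S \<inter> Od))" using False by presburger
      then show ?thesis unfolding sT phi_def using cT F2 tS by simp
    qed
  qed
qed

lemma rep_Mh: "even_subset_rep \<pi> = Mh ((`) \<pi>)"
  unfolding even_subset_rep_def Mh_def by simp

lemma similar_main:
  assumes n2: "2 \<le> n" and en: "even n"
  shows "similar_on (even_subsets n) (even_subset_rep (sigma_pairs n)) (even_subset_rep (tau_pairs n))"
  unfolding rep_Mh
proof (rule sim_general[where \<phi> = phi])
  show "finite (even_subsets n)"
    unfolding even_subsets_def by (rule finite_subset[of _ "Pow {1..n}"]) auto
  fix S assume SX: "S \<in> even_subsets n"
  have "phi S \<in> even_subsets n"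
  proof (cases "odd (card (S \<inter> Od))")
    case True
    then show ?thesis unfolding phi_def using img_in_X[OF SX inj_s12 s12_range[OF n2]] by simp
  qed (simp add: phi_def SX)
  moreover have "sigma_pairs n ` S \<in> even_subsets n"
    using img_in_X[OF SX inj_sigma[OF en] sigma_range[OF en]] .
  ultimately show "phi S \<in> even_subsets n \<and> phi (phi S) = S \<and> sigma_pairs n ` S \<in> even_subsets n \<and>
          phi (sigma_pairs n ` S) = tau_pairs n ` phi S"
    using phi_phi phi_comm[OF n2 en SX] by simp
qed

lemma permutes_inv_lemma:
  assumes "\<And>i. f (f i) = i" "\<And>i. i \<in> A \<Longrightarrow> f i \<in> A" "\<And>i. i \<notin> A \<Longrightarrow> f i = i"
  shows "f permutes A"
proof (rule bij_imp_permutes)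
  show "bij_betw f A A"
    by (rule bij_betwI[where g = f]) (use assms in auto)
qed (use assms in auto)

theorem mainTheorem15:
  fixes n :: nat
  assumes "n \<ge> 2" and "even n"
  shows "unites_conjugacy_classes_even_subsets n \<and>
         sigma_pairs n permutes {1..n} \<and> tau_pairs n permutes {1..n} \<and>
         \<not> conj_Sn n (sigma_pairs n) (tau_pairs n) \<and>
         similar_on (even_subsets n) (even_subset_rep (sigma_pairs n)) (even_subset_rep (tau_pairs n))"
proof -
  have ps: "sigma_pairs n permutes {1..n}"
  proof (rule permutes_inv_lemma)
    show "\<And>i. sigma_pairs n (sigma_pairs n i) = i" using sigma_sigma assms(2) .
    show "\<And>i. i \<in> {1..n} \<Longrightarrow> sigma_pairs n i \<in> {1..n}" using sigma_range assms(2) .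
    show "\<And>i. i \<notin> {1..n} \<Longrightarrow> sigma_pairs n i = i" unfolding sigma_pairs_def by auto
  qed
  have pt: "tau_pairs n permutes {1..n}"
  proof (rule permutes_inv_lemma)
    show "\<And>i. tau_pairs n (tau_pairs n i) = i" using tau_tau assms(2) .
    show "\<And>i. i \<in> {1..n} \<Longrightarrow> tau_pairs n i \<in> {1..n}" using tau_range assms(2) .
    show "\<And>i. i \<notin> {1..n} \<Longrightarrow> tau_pairs n i = i" unfolding tau_pairs_def by auto
  qed
  have sim: "similar_on (even_subsets n) (even_subset_rep (sigma_pairs n)) (even_subset_rep (tau_pairs n))"
    using similar_main assms by simp
  have nc: "\<not> conj_Sn n (sigma_pairs n) (tau_pairs n)"
  proof
    assume "conj_Sn n (sigma_pairs n) (tau_pairs n)"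
    then obtain g where g: "g permutes {1..n}" and eq: "tau_pairs n = g \<circ> sigma_pairs n \<circ> inv g"
      unfolding conj_Sn_def by blast
    define x where "x = inv g 1"
    have "1 \<in> {1..n}" using assms by simp
    then have x: "x \<in> {1..n}" unfolding x_def
      using permutes_in_image[OF permutes_inv[OF g]] by simp
    have t1: "tau_pairs n 1 = 1" unfolding tau_pairs_def by simp
    have "tau_pairs n 1 = g (sigma_pairs n x)"
      using fun_cong[OF eq, of 1] unfolding x_def o_def .
    then have "g (sigma_pairs n x) = 1" using t1 by simp
    then have "inv g (g (sigma_pairs n x)) = inv g 1" by simp
    then have "sigma_pairs n x = inv g 1" using permutes_inverses(2)[OF g, of "sigma_pairs n x"] by simp
    then have "sigma_pairs n x = x" unfolding x_def .
    moreover have "sigma_pairs n x \<noteq> x" using x unfolding sigma_pairs_def by (simp split: if_splits; presburger)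
    ultimately show False by simp
  qed
  show ?thesis unfolding unites_conjugacy_classes_even_subsets_def
    using ps pt sim nc by blast
qed

end
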